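(* Let $n\ge 3$, $q=\frac{2n}{n-2}$, $\kappa=\frac{n-1}{n}$. Identify $S^1$ with $[-\pi,\pi]$ with endpoints identified, and let $\lambda=-1$ on $(-\pi,0)$, $\lambda=1$ on $(0,\pi)$. Let $N$ be a smooth positive function on $S^1$, $\gamma_N=-\frac{\int_{S^1}\lambda N}{\int_{S^1}N}$, and $t,\eta,\mu\in\mathbb{R}$. For $d>0$ let $\psi_d$ be the unique positive solution in $W^{2,\infty}(S^1)$ of $$-2\kappa q\,d^{-2q/n}\psi_d''-2\eta^2d^{-2q}\psi_d^{-q-1}-\kappa(\mu d^{-q}+\gamma_N+\lambda)^2\psi_d^{-q-1}+\kappa(t+\lambda)^2\psi_d^{q-1}=0,$$ and let $\mathcal{F}(d)=\psi_d(0)$. Suppose $|t|\neq1$ and let $$M_\infty=\max\left[\left|\frac{1-\gamma_N}{1-t}\right|^{1/q},\left|\frac{1+\gamma_N}{1+t}\right|^{1/q}\right].$$ If $\eta=\mu=0$, then $\mathcal{F}(d)\le M_\infty$ for all $d>0$. Otherwise there is a constant $c>0$ such that $\mathcal{F}(d)\ge c\,d^{-1}$ for all sufficiently small $d>0$. *)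

theory Defs
  imports "HOL-Analysis.Analysis"
begin

text \<open>S^1 is identified with [-pi,pi] with endpoints identified; functions on S^1
  are rendered as 2pi-periodic functions on the real line.\<close>

definition periodic_2pi :: "(real \<Rightarrow> real) \<Rightarrow> bool" where
  "periodic_2pi f \<longleftrightarrow> (\<forall>x. f (x + 2 * pi) = f x)"

text \<open>lambda = -1 on (-pi,0), 1 on (0,pi) (extended periodically; the value at the two
  points 0, pi is irrelevant, set to 0).\<close>
definition lam :: "real \<Rightarrow> real" where
  "lam x = (if sin x < 0 then -1 else if sin x > 0 then 1 else 0)"

definition smooth_fun :: "(real \<Rightarrow> real) \<Rightarrow> bool" where
  "smooth_fun f \<longleftrightarrow> (\<forall>k x. (deriv ^^ k) f differentiable (at x))"

definition qexp :: "nat \<Rightarrow> real" where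
  "qexp n = 2 * real n / (real n - 2)"

definition kappa :: "nat \<Rightarrow> real" where
  "kappa n = (real n - 1) / real n"

definition gammaN :: "(real \<Rightarrow> real) \<Rightarrow> real" where
  "gammaN N = - (integral {-pi..pi} (\<lambda>x. lam x * N x) / integral {-pi..pi} N)"

text \<open>W^{2,infinity}: psi is differentiable with derivative psi1, psi1 is the
  indefinite integral of a bounded function psi2 (the weak second derivative).\<close>
definition pos_W2inf_sol ::
  "nat \<Rightarrow> real \<Rightarrow> real \<Rightarrow> real \<Rightarrow> real \<Rightarrow> real \<Rightarrow> (real \<Rightarrow> real) \<Rightarrow> bool" where
  "pos_W2inf_sol n gam t eta mu d \<psi> \<longleftrightarrow>
     periodic_2pi \<psi> \<and> (\<forall>x. \<psi> x > 0) \<and>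
     (\<exists>\<psi>1 \<psi>2.
        (\<forall>x. (\<psi> has_real_derivative \<psi>1 x) (at x)) \<and>
        (\<forall>a b. a \<le> b \<longrightarrow> (\<psi>2 has_integral (\<psi>1 b - \<psi>1 a)) {a..b}) \<and>
        bounded (range \<psi>2) \<and>
        (AE x in lborel.
           - 2 * kappa n * qexp n * d powr (- 2 * qexp n / real n) * \<psi>2 x
           - 2 * eta\<^sup>2 * d powr (- 2 * qexp n) * \<psi> x powr (- qexp n - 1)
           - kappa n * (mu * d powr (- qexp n) + gam + lam x)\<^sup>2 * \<psi> x powr (- qexp n - 1)
           + kappa n * (t + lam x)\<^sup>2 * \<psi> x powr (qexp n - 1) = 0))"

end

theory Submission imports Defs begin

lemma AE_negl:
  assumes "AE x in lborel. P x"
  obtains S where "negligible S" "\<And>x. x \<notin> S \<Longrightarrow> P x"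
proof -
  from assms obtain N where N: "{x \<in> space lborel. \<not> P x} \<subseteq> N" "emeasure lborel N = 0" "N \<in> sets lborel"
    by (auto elim: AE_E)
  have "N \<in> null_sets lebesgue"
    using N by (metis null_sets_completionI null_setsI)
  then have "negligible N" by (simp add: negligible_iff_null_sets)
  then show ?thesis using N that by auto
qed

lemma int_lower:
  fixes f :: "real \<Rightarrow> real" and a b e I :: real
  assumes int: "(f has_integral I) {a..b}" and ab: "a \<le> b"
    and ae: "AE x in lborel. a < x \<and> x < b \<longrightarrow> e \<le> f x"
  shows "e * (b - a) \<le> I"
proof -
  obtain S where S: "negligible S" "\<And>x. x \<notin> S \<Longrightarrow> (a < x \<and> x < b \<longrightarrow> e \<le> f x)"
    using ae AE_negl by blast
  define S' where "S' = insert a (insert b S)"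
  have nS': "negligible S'" using S(1) unfolding S'_def by simp
  define g where "g x = (if x \<in> S' then e else f x)" for x
  have "(g has_integral I) {a..b}"
    by (rule has_integral_spike[OF nS' _ int]) (auto simp: g_def)
  moreover have "((\<lambda>x. e) has_integral e * (b - a)) {a..b}"
    using has_integral_const_real[of e a b] ab by (simp add: mult.commute)
  moreover have "\<And>x. x \<in> {a..b} \<Longrightarrow> e \<le> g x"
    using S(2) by (auto simp: g_def S'_def)
  ultimately show ?thesis by (metis has_integral_le)
qed

lemma maxp:
  fixes \<psi> \<psi>1 \<psi>2 :: "real \<Rightarrow> real"
  assumes per: "periodic_2pi \<psi>"
    and der: "\<forall>x. (\<psi> has_real_derivative \<psi>1 x) (at x)"
    and int: "\<forall>a b. a \<le> b \<longrightarrow> (\<psi>2 has_integral (\<psi>1 b - \<psi>1 a)) {a..b}"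
    and x0: "x0 \<in> {-pi..pi}" "\<forall>y\<in>{-pi..pi}. \<psi> y \<le> \<psi> x0"
    and d: "\<delta> > 0" and e: "\<epsilon> > 0"
    and ae: "AE x in lborel. x0 < x \<and> x < x0 + \<delta> \<longrightarrow> \<epsilon> \<le> \<psi>2 x"
  shows False
proof -
  have loc: "\<psi> y \<le> \<psi> x0" if "\<bar>x0 - y\<bar> < pi" for y
  proof -
    consider "y < -pi" | "y \<in> {-pi..pi}" | "y > pi" by force
    then show ?thesis
    proof cases
      case 1
      have "\<psi> (y + 2*pi) = \<psi> y" using per unfolding periodic_2pi_def by blast
      moreover have "y + 2*pi \<in> {-pi..pi}" using 1 that x0(1) by auto
      ultimately show ?thesis using x0(2) by metis
    next
      case 2 then show ?thesis using x0(2) by blast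
    next
      case 3
      have "\<psi> (y - 2*pi + 2*pi) = \<psi> (y - 2*pi)" using per unfolding periodic_2pi_def by blast
      moreover have "y - 2*pi \<in> {-pi..pi}" using 3 that x0(1) by auto
      ultimately show ?thesis using x0(2) by simp
    qed
  qed
  have z: "\<psi>1 x0 = 0"
    using DERIV_local_max[OF der[rule_format, of x0] pi_gt_zero] loc by blast
  define h where "h = min (\<delta>/2) 1"
  have h: "h > 0" "h < \<delta>" "h < pi" using d pi_gt3 by (auto simp: h_def)
  have pos: "\<psi>1 s > 0" if "x0 < s" "s \<le> x0 + h" for s
  proof -
    have "\<epsilon> * (s - x0) \<le> \<psi>1 s - \<psi>1 x0"
      apply (rule int_lower[OF int[rule_format]])
      using that h apply simp
      using that h by (auto intro: eventually_mono[OF ae])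
    moreover have "\<epsilon> * (s - x0) > 0" using e that by simp
    ultimately show ?thesis using z by simp
  qed
  obtain \<xi> where \<xi>: "x0 < \<xi>" "\<xi> < x0 + h" "\<psi> (x0 + h) - \<psi> x0 = h * \<psi>1 \<xi>"
    using MVT2[of x0 "x0 + h" \<psi> \<psi>1] der h(1) by auto
  have "\<psi> (x0 + h) > \<psi> x0" using \<xi> pos[of \<xi>] h by (simp add: algebra_simps)
  moreover have "\<psi> (x0 + h) \<le> \<psi> x0" using loc h by simp
  ultimately show False by simp
qed

lemma pw1:
  fixes K a k q m' m y p D D' eta mu g l t c :: real
  assumes K: "K = 2 * k * q * a" "a > 0" and k: "k > 0" and q: "q > 0" and m': "0 < m'" "m' \<le> y" "y \<le> m"
    and em: "eta = 0" "mu = 0"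
    and eq: "- 2 * k * q * a * p - 2 * eta\<^sup>2 * D * y powr (- q - 1) - k * (mu * D' + g + l)\<^sup>2 * y powr (- q - 1)
             + k * (t + l)\<^sup>2 * y powr (q - 1) = 0"
    and c: "0 < c" "c \<le> (t + l)\<^sup>2 * (m' powr q)\<^sup>2 - (g + l)\<^sup>2"
  shows "k * m powr (- q - 1) * c / K \<le> p"
proof -
  have K0: "K > 0" using K k q by simp
  define R where "R = y powr (- q - 1)"
  define Y where "Y = y powr q"
  have y0: "y > 0" using m' by simp
  have R0: "R > 0" using y0 by (simp add: R_def)
  have Rm: "m powr (- q - 1) \<le> R" unfolding R_def
    by (rule powr_mono2') (use q m' in auto)
  have split: "y powr (q - 1) = R * Y\<^sup>2"
    unfolding R_def Y_def power2_eq_square by (simp add: powr_add[symmetric])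
  have "m' powr q \<le> Y" unfolding Y_def by (rule powr_mono2) (use q m' in auto)
  then have Y2: "(m' powr q)\<^sup>2 \<le> Y\<^sup>2" by (simp add: power_mono)
  have Kp: "K * p = k * R * ((t + l)\<^sup>2 * Y\<^sup>2 - (g + l)\<^sup>2)"
    using eq em split K(1) unfolding R_def[symmetric] by (simp add: algebra_simps)
  have "c \<le> (t + l)\<^sup>2 * Y\<^sup>2 - (g + l)\<^sup>2"
    using c(2) Y2 mult_left_mono[OF Y2, of "(t+l)\<^sup>2"] by simp
  then have "k * R * c \<le> K * p" unfolding Kp using k R0 by simp
  moreover have "k * m powr (- q - 1) * c \<le> k * R * c" using Rm k c by simp
  ultimately have "k * m powr (- q - 1) * c \<le> K * p" by linarith
  then show ?thesis using K0 by (simp add: divide_le_eq mult.commute)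
qed

lemma pw2:
  fixes K a k q d y u c0 p eta mu g l t T b0 :: real
  assumes K: "K = 2 * k * q * a" "a > 0" and k: "k > 0" and q: "q > 0" and d: "d > 0" and y: "0 < y" "y \<le> u"
    and u: "u = c0 / d" "c0 > 0"
    and T: "(t + l)\<^sup>2 \<le> T" and sb: "k * T * (c0 powr q)\<^sup>2 < b0"
    and B: "b0 \<le> 2 * eta\<^sup>2 + k * (mu + d powr q * (g + l))\<^sup>2"
    and eq: "- 2 * k * q * a * p - 2 * eta\<^sup>2 * d powr (- 2 * q) * y powr (- q - 1)
             - k * (mu * d powr (- q) + g + l)\<^sup>2 * y powr (- q - 1)
             + k * (t + l)\<^sup>2 * y powr (q - 1) = 0"
  shows "p \<le> - (u powr (- q - 1) * (d powr (- q))\<^sup>2 * (b0 - k * T * (c0 powr q)\<^sup>2) / K)"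
proof -
  have K0: "K > 0" using K k q by simp
  define R where "R = y powr (- q - 1)"
  define Y where "Y = y powr q"
  define D where "D = d powr (- q)"
  define s where "s = (c0 powr q)\<^sup>2"
  define B' where "B' = 2 * eta\<^sup>2 + k * (mu + d powr q * (g + l))\<^sup>2"
  have R0: "R > 0" using y by (simp add: R_def)
  have D0: "D > 0" using d by (simp add: D_def)
  have u0: "u > 0" using u d by simp
  have Rm: "u powr (- q - 1) \<le> R" unfolding R_def
    by (rule powr_mono2') (use q y in auto)
  have split: "y powr (q - 1) = R * Y\<^sup>2"
    unfolding R_def Y_def power2_eq_square by (simp add: powr_add[symmetric])
  have DD: "d powr (- 2 * q) = D\<^sup>2"
    unfolding D_def power2_eq_square by (simp add: powr_add[symmetric])
  have Dq: "D * d powr q = 1" unfolding D_def using d by (simp add: powr_add[symmetric])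
  have lin: "mu * d powr (- q) + g + l = D * (mu + d powr q * (g + l))"
    using Dq unfolding D_def by (simp add: algebra_simps)
  have E: "2 * eta\<^sup>2 * d powr (- 2 * q) + k * (mu * d powr (- q) + g + l)\<^sup>2 = D\<^sup>2 * B'"
    unfolding DD lin B'_def power_mult_distrib by (simp add: algebra_simps)
  have uq: "u powr q = c0 powr q * D"
    using u d unfolding D_def by (simp add: powr_divide powr_minus_divide)
  have "Y \<le> u powr q" unfolding Y_def by (rule powr_mono2) (use q y in auto)
  moreover have "0 \<le> Y" by (simp add: Y_def)
  ultimately have Y2: "Y\<^sup>2 \<le> s * D\<^sup>2"
    unfolding s_def uq by (metis power_mono power_mult_distrib)
  have Kp: "K * p = R * (k * (t + l)\<^sup>2 * Y\<^sup>2 - D\<^sup>2 * B')"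
  proof -
    have "K * p = k * (t + l)\<^sup>2 * y powr (q - 1) - (2 * eta\<^sup>2 * d powr (- 2 * q) + k * (mu * d powr (- q) + g + l)\<^sup>2) * R"
      using eq K(1) unfolding R_def by (simp add: algebra_simps)
    then show ?thesis unfolding E split by (simp add: algebra_simps)
  qed
  have "k * (t + l)\<^sup>2 * Y\<^sup>2 \<le> k * T * (s * D\<^sup>2)"
    using k T Y2 order_trans[OF zero_le_power2 T] by (intro mult_mono mult_left_mono) auto
  moreover have "D\<^sup>2 * b0 \<le> D\<^sup>2 * B'" using B unfolding B'_def by (intro mult_left_mono) auto
  ultimately have "k * (t + l)\<^sup>2 * Y\<^sup>2 - D\<^sup>2 * B' \<le> - (D\<^sup>2 * (b0 - k * T * s))"
    by (simp add: algebra_simps)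
  moreover have pos: "0 < D\<^sup>2 * (b0 - k * T * s)" using D0 sb unfolding s_def by simp
  ultimately have "K * p \<le> - (R * (D\<^sup>2 * (b0 - k * T * s)))"
    unfolding Kp using R0 by (metis minus_mult_right mult_left_mono less_imp_le)
  also have "\<dots> \<le> - (u powr (- q - 1) * (D\<^sup>2 * (b0 - k * T * s)))"
    using mult_right_mono[OF Rm less_imp_le[OF pos]] by simp
  finally have "K * p \<le> - (u powr (- q - 1) * (D\<^sup>2 * (b0 - k * T * s)))" .
  then have "p \<le> (- (u powr (- q - 1) * (D\<^sup>2 * (b0 - k * T * s)))) / K"
    using K0 by (subst pos_le_divide_eq) (auto simp: mult.commute)
  then show ?thesis unfolding s_def D_def by (simp add: mult.assoc)
qed

lemma periodic_loc:
  fixes f :: "real \<Rightarrow> real"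
  assumes per: "periodic_2pi f" and x0: "x0 \<in> {-pi..pi}"
    and P: "\<forall>y\<in>{-pi..pi}. P (f y) (f x0)" and y: "\<bar>x0 - y\<bar> < pi"
  shows "P (f y) (f x0)"
proof -
  consider "y < -pi" | "y \<in> {-pi..pi}" | "y > pi" by force
  then show ?thesis
  proof cases
    case 1
    have "f (y + 2*pi) = f y" using per unfolding periodic_2pi_def by blast
    moreover have "y + 2*pi \<in> {-pi..pi}" using 1 y x0 by auto
    ultimately show ?thesis using P by metis
  next
    case 2 then show ?thesis using P by blast
  next
    case 3
    have "f (y - 2*pi + 2*pi) = f (y - 2*pi)" using per unfolding periodic_2pi_def by blast
    moreover have "y - 2*pi \<in> {-pi..pi}" using 3 y x0 by auto
    ultimately show ?thesis using P by simp
  qed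
qed

lemma minp:
  fixes \<psi> \<psi>1 \<psi>2 :: "real \<Rightarrow> real"
  assumes per: "periodic_2pi \<psi>"
    and der: "\<forall>x. (\<psi> has_real_derivative \<psi>1 x) (at x)"
    and int: "\<forall>a b. a \<le> b \<longrightarrow> (\<psi>2 has_integral (\<psi>1 b - \<psi>1 a)) {a..b}"
    and x0: "x0 \<in> {-pi..pi}" "\<forall>y\<in>{-pi..pi}. \<psi> x0 \<le> \<psi> y"
    and d: "\<delta> > 0" and e: "\<epsilon> > 0"
    and ae: "AE x in lborel. x0 < x \<and> x < x0 + \<delta> \<longrightarrow> \<psi>2 x \<le> - \<epsilon>"
  shows False
proof (rule maxp[of "\<lambda>x. - \<psi> x" "\<lambda>x. - \<psi>1 x" "\<lambda>x. - \<psi>2 x" x0 \<delta> \<epsilon>])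
  show "periodic_2pi (\<lambda>x. - \<psi> x)" using per unfolding periodic_2pi_def by simp
  show "\<forall>x. ((\<lambda>x. - \<psi> x) has_real_derivative - \<psi>1 x) (at x)"
    using der by (auto intro: derivative_intros)
  show "\<forall>a b. a \<le> b \<longrightarrow> ((\<lambda>x. - \<psi>2 x) has_integral - \<psi>1 b - - \<psi>1 a) {a..b}"
  proof (intro allI impI)
    fix a b :: real assume "a \<le> b"
    then have "((\<lambda>x. - \<psi>2 x) has_integral - (\<psi>1 b - \<psi>1 a)) {a..b}"
      using int by (intro has_integral_neg) auto
    then show "((\<lambda>x. - \<psi>2 x) has_integral - \<psi>1 b - - \<psi>1 a) {a..b}" by simp
  qed
  show "AE x in lborel. x0 < x \<and> x < x0 + \<delta> \<longrightarrow> \<epsilon> \<le> - \<psi>2 x"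
    using ae by (rule eventually_mono) auto
qed (use x0 d e in auto)

lemma sin_ev: "eventually (\<lambda>x. sin x \<noteq> 0) (at (x0::real))"
proof (cases "sin x0 = 0")
  case False
  have "(sin \<longlongrightarrow> sin x0) (at x0)" 
  proof -
    have "isCont sin x0" by (intro continuous_intros)
    then show ?thesis by (simp add: isCont_def)
  qed
  then show ?thesis using False by (rule tendsto_imp_eventually_ne)
next
  case True
  then have c: "cos x0 \<noteq> 0" using sin_cos_squared_add[of x0] by auto
  show ?thesis unfolding eventually_at
  proof (intro exI[of _ pi] conjI ballI impI pi_gt_zero)
    fix x :: real assume x: "x \<noteq> x0 \<and> dist x x0 < pi"
    have sx: "sin x = cos x0 * sin (x - x0)" using sin_add[of x0 "x - x0"] True by simp
    have "sin (x - x0) \<noteq> 0"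
    proof (cases "x > x0")
      case True then show ?thesis using x by (intro sin_gt_zero[THEN less_imp_neq, symmetric]) (auto simp: dist_real_def)
    next
      case False
      then have "sin (x0 - x) > 0" using x by (intro sin_gt_zero) (auto simp: dist_real_def)
      moreover have "sin (x - x0) = - sin (x0 - x)" by (metis minus_diff_eq sin_minus)
      ultimately show ?thesis by simp
    qed
    then show "sin x \<noteq> 0" using sx c by simp
  qed
qed

lemma lam_ev: "eventually (\<lambda>x. lam x = 1 \<or> lam x = -1) (at (x0::real))"
  using sin_ev[of x0] by (rule eventually_mono) (auto simp: lam_def)

lemma pos_aux:
  fixes q m' a b :: real
  assumes q: "q > 0" and m': "m' > 0" and lt: "\<bar>a / b\<bar> powr (1 / q) < m'" and b: "b \<noteq> 0"
  shows "a\<^sup>2 < b\<^sup>2 * (m' powr q)\<^sup>2"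
proof -
  have "\<bar>a / b\<bar> = (\<bar>a / b\<bar> powr (1 / q)) powr q"
    using q by (simp add: powr_powr)
  also have "\<dots> < m' powr q" by (rule powr_less_mono2) (use q lt in auto)
  finally have "\<bar>a\<bar> / \<bar>b\<bar> < m' powr q" by simp
  then have "\<bar>a\<bar> < \<bar>b\<bar> * m' powr q" using b by (simp add: divide_less_eq mult.commute)
  then have "\<bar>a\<bar>\<^sup>2 < (\<bar>b\<bar> * m' powr q)\<^sup>2" by (rule power_strict_mono) auto
  then show ?thesis by (simp add: power_mult_distrib)
qed

lemma mu_aux:
  fixes mu e :: real
  assumes "\<bar>e\<bar> < \<bar>mu\<bar> / 2"
  shows "mu\<^sup>2 / 4 \<le> (mu + e)\<^sup>2"
proof -
  have "\<bar>mu\<bar> / 2 \<le> \<bar>mu + e\<bar>" using assms abs_triangle_ineq2[of mu "-e"] by auto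
  then have "(\<bar>mu\<bar> / 2)\<^sup>2 \<le> \<bar>mu + e\<bar>\<^sup>2" by (rule power_mono) simp
  then show ?thesis by (simp add: power_divide)
qed

theorem lemma3p14:
  fixes n :: nat and N :: "real \<Rightarrow> real" and t eta mu :: real
    and \<psi> :: "real \<Rightarrow> real \<Rightarrow> real"
  assumes n3: "n \<ge> 3"
    and N_smooth: "smooth_fun N" and N_per: "periodic_2pi N" and N_pos: "\<forall>x. N x > 0"
    and sol: "\<forall>d>0. pos_W2inf_sol n (gammaN N) t eta mu d (\<psi> d)"
    and t1: "\<bar>t\<bar> \<noteq> 1"
  shows "(eta = 0 \<and> mu = 0 \<longrightarrow>
           (\<forall>d>0. \<psi> d 0 \<le> max (\<bar>(1 - gammaN N) / (1 - t)\<bar> powr (1 / qexp n))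
                                  (\<bar>(1 + gammaN N) / (1 + t)\<bar> powr (1 / qexp n))))
       \<and> (\<not> (eta = 0 \<and> mu = 0) \<longrightarrow>
           (\<exists>c>0. \<forall>\<^sub>F d in at_right 0. \<psi> d 0 \<ge> c / d))"
proof -
  define q where "q = qexp n"
  define k where "k = kappa n"
  define g where "g = gammaN N"
  have q0: "q > 0" using n3 by (simp add: q_def qexp_def)
  have k0: "k > 0" using n3 by (simp add: k_def kappa_def)
  have tp: "t + 1 \<noteq> 0" "t - 1 \<noteq> 0" using t1 by (auto simp: abs_if split: if_splits)
  have solD: "\<exists>\<psi>1 \<psi>2. periodic_2pi (\<psi> d) \<and> (\<forall>x. \<psi> d x > 0) \<and>
        (\<forall>x. (\<psi> d has_real_derivative \<psi>1 x) (at x)) \<and>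
        (\<forall>a b. a \<le> b \<longrightarrow> (\<psi>2 has_integral (\<psi>1 b - \<psi>1 a)) {a..b}) \<and>
        (AE x in lborel.
           - 2 * k * q * d powr (- 2 * q / real n) * \<psi>2 x
           - 2 * eta\<^sup>2 * d powr (- 2 * q) * \<psi> d x powr (- q - 1)
           - k * (mu * d powr (- q) + g + lam x)\<^sup>2 * \<psi> d x powr (- q - 1)
           + k * (t + lam x)\<^sup>2 * \<psi> d x powr (q - 1) = 0)" if d: "d > 0" for d
  proof -
    from sol d have "pos_W2inf_sol n (gammaN N) t eta mu d (\<psi> d)" by simp
    then show ?thesis unfolding pos_W2inf_sol_def q_def k_def g_def
      by (elim conjE exE) (intro exI conjI, assumption+)
  qed
  have contd: "continuous_on {-pi..pi} f" if "\<forall>x. (f has_real_derivative f1 x) (at x)" for f f1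
    using that by (intro continuous_at_imp_continuous_on) (auto intro: DERIV_isCont)
  have tend: "(f \<longlongrightarrow> f x0) (at x0)" if "\<forall>x. (f has_real_derivative f1 x) (at x)" for f f1 and x0 :: real
    using that DERIV_isCont isCont_def by blast

  have part1: "\<psi> d 0 \<le> max (\<bar>(1 - g) / (1 - t)\<bar> powr (1 / q)) (\<bar>(1 + g) / (1 + t)\<bar> powr (1 / q))"
    if em: "eta = 0" "mu = 0" and d: "d > 0" for d
  proof (rule ccontr)
    define M where "M = max (\<bar>(1 - g) / (1 - t)\<bar> powr (1 / q)) (\<bar>(1 + g) / (1 + t)\<bar> powr (1 / q))"
    assume "\<not> \<psi> d 0 \<le> max (\<bar>(1 - g) / (1 - t)\<bar> powr (1 / q)) (\<bar>(1 + g) / (1 + t)\<bar> powr (1 / q))"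
    then have gt: "\<psi> d 0 > M" unfolding M_def by (simp only: not_le)
    obtain \<psi>1 \<psi>2 where per: "periodic_2pi (\<psi> d)" and pos: "\<forall>x. \<psi> d x > 0"
      and der: "\<forall>x. (\<psi> d has_real_derivative \<psi>1 x) (at x)"
      and int: "\<forall>a b. a \<le> b \<longrightarrow> (\<psi>2 has_integral (\<psi>1 b - \<psi>1 a)) {a..b}"
      and ae: "AE x in lborel.
           - 2 * k * q * d powr (- 2 * q / real n) * \<psi>2 x
           - 2 * eta\<^sup>2 * d powr (- 2 * q) * \<psi> d x powr (- q - 1)
           - k * (mu * d powr (- q) + g + lam x)\<^sup>2 * \<psi> d x powr (- q - 1)
           + k * (t + lam x)\<^sup>2 * \<psi> d x powr (q - 1) = 0"
      using solD[OF d] by blast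
    obtain x0 where x0: "x0 \<in> {-pi..pi}" "\<forall>y\<in>{-pi..pi}. \<psi> d y \<le> \<psi> d x0"
      using continuous_attains_sup[OF compact_Icc _ contd[OF der]] by auto
    define m where "m = \<psi> d x0"
    have "\<psi> d 0 \<le> m" using x0 by (simp add: m_def)
    have M0: "M \<ge> 0" by (simp add: M_def le_max_iff_disj)
    define m' where "m' = (m + M) / 2"
    have m': "m' > 0" "m' < m" "M < m'" using gt M0 \<open>\<psi> d 0 \<le> m\<close> by (auto simp: m'_def)
    have "eventually (\<lambda>x. \<psi> d x > m' \<and> (lam x = 1 \<or> lam x = -1)) (at x0)"
      using order_tendstoD(1)[OF tend[OF der, of x0], of m'] m' lam_ev[of x0]
      by (auto simp: m_def intro: eventually_conj)
    then obtain \<delta> where \<delta>: "\<delta> > 0" "\<And>x. x \<noteq> x0 \<Longrightarrow> dist x x0 < \<delta> \<Longrightarrow> \<psi> d x > m' \<and> (lam x = 1 \<or> lam x = -1)"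
      unfolding eventually_at by auto
    define c1 where "c1 = (t + 1)\<^sup>2 * (m' powr q)\<^sup>2 - (g + 1)\<^sup>2"
    define c2 where "c2 = (t + -1)\<^sup>2 * (m' powr q)\<^sup>2 - (g + -1)\<^sup>2"
    have c1: "c1 > 0"
    proof -
      have "\<bar>(1 + g) / (1 + t)\<bar> powr (1 / q) < m'" using m' by (simp add: M_def)
      from pos_aux[OF q0 m'(1) this] tp show ?thesis by (simp add: c1_def add.commute)
    qed
    have c2: "c2 > 0"
    proof -
      have "\<bar>(1 - g) / (1 - t)\<bar> powr (1 / q) < m'" using m' by (simp add: M_def)
      from pos_aux[OF q0 m'(1) this] tp have "(1 - g)\<^sup>2 < (1 - t)\<^sup>2 * (m' powr q)\<^sup>2" by simp
      moreover have "(1 - g)\<^sup>2 = (g + -1)\<^sup>2" "(1 - t)\<^sup>2 = (t + -1)\<^sup>2" by (simp_all add: power2_commute)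
      ultimately show ?thesis by (simp add: c2_def)
    qed
    define c where "c = min c1 c2"
    define a where "a = d powr (- 2 * q / real n)"
    define K where "K = 2 * k * q * a"
    have a0: "a > 0" using d by (simp add: a_def)
    have K0: "K > 0" using a0 k0 q0 by (simp add: K_def)
    define \<epsilon> where "\<epsilon> = k * m powr (- q - 1) * c / K"
    have m0: "m > 0" using pos by (simp add: m_def)
    have \<epsilon>: "\<epsilon> > 0" unfolding \<epsilon>_def c_def using c1 c2 k0 K0 m0 by (intro divide_pos_pos mult_pos_pos) auto
    show False
    proof (rule maxp[OF per der int x0 _ \<epsilon>, of "min \<delta> pi"])
      show "min \<delta> pi > 0" using \<delta> by simp
      show "AE x in lborel. x0 < x \<and> x < x0 + min \<delta> pi \<longrightarrow> \<epsilon> \<le> \<psi>2 x"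
        using ae
      proof (rule eventually_mono, intro impI)
        fix x assume eq: "- 2 * k * q * d powr (- 2 * q / real n) * \<psi>2 x
           - 2 * eta\<^sup>2 * d powr (- 2 * q) * \<psi> d x powr (- q - 1)
           - k * (mu * d powr (- q) + g + lam x)\<^sup>2 * \<psi> d x powr (- q - 1)
           + k * (t + lam x)\<^sup>2 * \<psi> d x powr (q - 1) = 0"
          and x: "x0 < x \<and> x < x0 + min \<delta> pi"
        have h: "\<psi> d x > m'" "lam x = 1 \<or> lam x = -1"
          using \<delta>(2)[of x] x by (auto simp: dist_real_def)
        have le: "\<psi> d x \<le> m"
          using periodic_loc[OF per x0(1), of "(\<le>)" x] x0(2) x by (auto simp: m_def)
        have cc: "c \<le> (t + lam x)\<^sup>2 * (m' powr q)\<^sup>2 - (g + lam x)\<^sup>2"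
          using h(2) by (auto simp: c_def c1_def c2_def)
        show "\<epsilon> \<le> \<psi>2 x"
          unfolding \<epsilon>_def
          by (rule pw1[OF K_def a0 k0 q0 m'(1) less_imp_le[OF h(1)] le em eq[folded a_def]
                _ cc]) (use c1 c2 in \<open>simp add: c_def\<close>)
      qed
    qed
  qed

  have part2: "\<exists>c>0. \<forall>\<^sub>F d in at_right 0. c / d \<le> \<psi> d 0" if ne: "\<not> (eta = 0 \<and> mu = 0)"
  proof -
    obtain b0 d0 where b0: "b0 > 0" "d0 > 0"
      and bd: "\<And>d l. 0 < d \<Longrightarrow> d < d0 \<Longrightarrow> l = 1 \<or> l = -1 \<Longrightarrow>
                b0 \<le> 2 * eta\<^sup>2 + k * (mu + d powr q * (g + l))\<^sup>2"
    proof (cases "mu = 0")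
      case True
      then have "eta \<noteq> 0" using ne by simp
      then show ?thesis using k0 by (intro that[of "2 * eta\<^sup>2" 1]) auto
    next
      case False
      define d0 where "d0 = (\<bar>mu\<bar> / (2 * (\<bar>g\<bar> + 1))) powr (1 / q)"
      have d0: "d0 > 0" using False by (simp add: d0_def)
      show ?thesis
      proof (rule that[of "k * mu\<^sup>2 / 4" d0])
        show "k * mu\<^sup>2 / 4 > 0" using k0 False by simp
        show "d0 > 0" by (rule d0)
        fix d l :: real assume d: "0 < d" "d < d0" and l: "l = 1 \<or> l = -1"
        have "d powr q < d0 powr q" by (rule powr_less_mono2) (use q0 d in auto)
        also have "d0 powr q = \<bar>mu\<bar> / (2 * (\<bar>g\<bar> + 1))"
          unfolding d0_def using q0 by (simp add: powr_powr)
        finally have "d powr q < \<bar>mu\<bar> / (2 * (\<bar>g\<bar> + 1))" .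
        then have "d powr q * (2 * (\<bar>g\<bar> + 1)) < \<bar>mu\<bar>"
          using pos_less_divide_eq[of "2 * (\<bar>g\<bar> + 1)" "d powr q" "\<bar>mu\<bar>"] by simp
        then have dq: "d powr q * (\<bar>g\<bar> + 1) < \<bar>mu\<bar> / 2" by (simp add: algebra_simps)
        have "\<bar>g + l\<bar> \<le> \<bar>g\<bar> + 1" using l by auto
        then have "\<bar>d powr q * (g + l)\<bar> \<le> d powr q * (\<bar>g\<bar> + 1)"
          by (simp add: abs_mult mult_left_mono)
        then have "mu\<^sup>2 / 4 \<le> (mu + d powr q * (g + l))\<^sup>2"
          using dq by (intro mu_aux) simp
        then have "k * mu\<^sup>2 / 4 \<le> k * (mu + d powr q * (g + l))\<^sup>2"
          using k0 mult_left_mono[of "mu\<^sup>2 / 4" _ k] by simp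
        then show "k * mu\<^sup>2 / 4 \<le> 2 * eta\<^sup>2 + k * (mu + d powr q * (g + l))\<^sup>2"
          by (simp add: add_increasing)
      qed
    qed
    define T where "T = max ((t + 1)\<^sup>2) ((t + -1)\<^sup>2)"
    have T0: "T > 0" using tp by (simp add: T_def less_max_iff_disj)
    define w where "w = sqrt (b0 / (k * T)) / 2"
    have w0: "w > 0" using b0 k0 T0 by (simp add: w_def)
    define c0 where "c0 = w powr (1 / q)"
    have c00: "c0 > 0" using w0 by (simp add: c0_def)
    have c0q: "c0 powr q = w" using q0 w0 by (simp add: c0_def powr_powr)
    have sb: "k * T * (c0 powr q)\<^sup>2 < b0"
    proof -
      have "w\<^sup>2 = b0 / (k * T) / 4" using b0 k0 T0 by (simp add: w_def power_divide)
      then have "k * T * w\<^sup>2 = b0 / 4" using k0 T0 by simp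
      then show ?thesis using c0q b0 by simp
    qed
    show ?thesis
    proof (intro exI[of _ "c0 / 2"] conjI)
      show "c0 / 2 > 0" using c00 by simp
      show "\<forall>\<^sub>F d in at_right 0. c0 / 2 / d \<le> \<psi> d 0"
        unfolding eventually_at_right_field
      proof (intro exI[of _ d0] conjI allI impI)
        show "d0 > 0" by (rule b0(2))
        fix d :: real assume dd: "0 < d" "d < d0"
        then have d: "d > 0" by simp
        show "c0 / 2 / d \<le> \<psi> d 0"
        proof (rule ccontr)
          assume "\<not> c0 / 2 / d \<le> \<psi> d 0"
          then have lt: "\<psi> d 0 < c0 / 2 / d" by simp
          obtain \<psi>1 \<psi>2 where per: "periodic_2pi (\<psi> d)" and pos: "\<forall>x. \<psi> d x > 0"
            and der: "\<forall>x. (\<psi> d has_real_derivative \<psi>1 x) (at x)"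
            and int: "\<forall>a b. a \<le> b \<longrightarrow> (\<psi>2 has_integral (\<psi>1 b - \<psi>1 a)) {a..b}"
            and ae: "AE x in lborel.
                 - 2 * k * q * d powr (- 2 * q / real n) * \<psi>2 x
                 - 2 * eta\<^sup>2 * d powr (- 2 * q) * \<psi> d x powr (- q - 1)
                 - k * (mu * d powr (- q) + g + lam x)\<^sup>2 * \<psi> d x powr (- q - 1)
                 + k * (t + lam x)\<^sup>2 * \<psi> d x powr (q - 1) = 0"
            using solD[OF d] by blast
          obtain x0 where x0: "x0 \<in> {-pi..pi}" "\<forall>y\<in>{-pi..pi}. \<psi> d x0 \<le> \<psi> d y"
            using continuous_attains_inf[OF compact_Icc _ contd[OF der]] by auto
          have "\<psi> d x0 \<le> \<psi> d 0" using x0 by simp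
          define u where "u = c0 / d"
          have "c0 / 2 / d < c0 / d" using c00 d by (intro divide_strict_right_mono) auto
          then have mu': "\<psi> d x0 < u" using lt \<open>\<psi> d x0 \<le> \<psi> d 0\<close>
            unfolding u_def by linarith
          have "eventually (\<lambda>x. \<psi> d x < u \<and> (lam x = 1 \<or> lam x = -1)) (at x0)"
            using order_tendstoD(2)[OF tend[OF der, of x0] mu'] lam_ev[of x0]
            by (auto intro: eventually_conj)
          then obtain \<delta> where \<delta>: "\<delta> > 0" "\<And>x. x \<noteq> x0 \<Longrightarrow> dist x x0 < \<delta> \<Longrightarrow> \<psi> d x < u \<and> (lam x = 1 \<or> lam x = -1)"
            unfolding eventually_at by auto
          define a where "a = d powr (- 2 * q / real n)"
          define K where "K = 2 * k * q * a"
          have a0: "a > 0" using d by (simp add: a_def)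
          have K0: "K > 0" using a0 k0 q0 by (simp add: K_def)
          define \<epsilon> where "\<epsilon> = u powr (- q - 1) * (d powr (- q))\<^sup>2 * (b0 - k * T * (c0 powr q)\<^sup>2) / K"
          have \<epsilon>: "\<epsilon> > 0" unfolding \<epsilon>_def using K0 sb d c00 by (simp add: u_def)
          show False
          proof (rule minp[OF per der int x0 \<delta>(1) \<epsilon>])
            show "AE x in lborel. x0 < x \<and> x < x0 + \<delta> \<longrightarrow> \<psi>2 x \<le> - \<epsilon>"
              using ae
            proof (rule eventually_mono, intro impI)
              fix x assume eq: "- 2 * k * q * d powr (- 2 * q / real n) * \<psi>2 x
                 - 2 * eta\<^sup>2 * d powr (- 2 * q) * \<psi> d x powr (- q - 1)
                 - k * (mu * d powr (- q) + g + lam x)\<^sup>2 * \<psi> d x powr (- q - 1)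
                 + k * (t + lam x)\<^sup>2 * \<psi> d x powr (q - 1) = 0"
                and x: "x0 < x \<and> x < x0 + \<delta>"
              have h: "\<psi> d x < u" "lam x = 1 \<or> lam x = -1"
                using \<delta>(2)[of x] x by (auto simp: dist_real_def)
              have Tl: "(t + lam x)\<^sup>2 \<le> T" using h(2) by (auto simp: T_def)
              have B: "b0 \<le> 2 * eta\<^sup>2 + k * (mu + d powr q * (g + lam x))\<^sup>2"
                using bd[OF d _ h(2)] dd by simp
              show "\<psi>2 x \<le> - \<epsilon>"
                unfolding \<epsilon>_def
                by (rule pw2[OF K_def a0 k0 q0 d pos[rule_format] less_imp_le[OF h(1)] u_def c00 Tl sb B
                      eq[folded a_def]])
            qed
          qed
        qed
      qed
    qed
  qed
  show ?thesis using part1 part2 unfolding q_def g_def by auto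
qed
end
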